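(* The relaxed log-exp-supremum depends continuously on the input data: for each $n\in\mathbb N$, the map $\mathrm{Sym}(2)^n\to\mathrm{Sym}(2)$, $(X_1,\dots,X_n)\mapsto\mathrm{Sup}_{\mathrm{RLE}}(\{X_1,\dots,X_n\})$, is continuous.
   Context: $\mathrm{Sym}(2)$: real symmetric $2\times2$ matrices. $\mathrm{Sup}_{\mathrm{LE}}(\mathcal X):=\lim_{m\to\infty}\frac1m\log\sum_{X\in\mathcal X}\exp(mX)$. Write $X_i=\lambda_iu_iu_i^{\mathsf T}+\mu_iv_iv_i^{\mathsf T}$ (spectral form, $\lambda_i\ge\mu_i$, orthonormal $u_i,v_i$). The multi-set of bases $\{\{u_i,v_i\}\}_i$ is generic if for no $i\neq j$ the vector $u_i$ is aligned (equal up to sign) with $u_j$. Families $\mathcal X^{(\delta)}$ converge planar to $\mathcal X$ if $X_i^{(\delta)}\to X_i$ as $\delta\to0$ and $X_i^{(\delta)}$ has the same eigenvalues as $X_i$ for all $i,\delta$. The relaxed log-exp-supremum is $\mathrm{Sup}_{\mathrm{RLE}}(\mathcal X):=\mathrm{Sup}_{\mathrm{LE}}(\mathcal X)$ if the bases of $\mathcal X$ are generic, and otherwise $\lim_{\delta\to0}\mathrm{Sup}_{\mathrm{LE}}(\mathcal X^{(\delta)})$ over families converging planar to $\mathcal X$ with generic bases. Equivalently (Theorem 5): with $\lambda_1$ a largest eigenvalue of $\mathcal X$ (eigenvector $u_1$, minor eigenvector $v_1$ of the same matrix) and $\lambda_2$ the next largest eigenvalue in the multi-set of all eigenvalues, $\mathrm{Sup}_{\mathrm{RLE}}(\mathcal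 X)=\lambda_1u_1u_1^{\mathsf T}+\lambda_2v_1v_1^{\mathsf T}$ if $\lambda_1$ occurs once, and $\lambda_1I$ otherwise. *)

theory Defs
  imports "HOL-Analysis.Analysis"
begin

type_synonym mat2 = "real^2^2"

definition sym2 :: "mat2 \<Rightarrow> bool" where
  "sym2 A \<longleftrightarrow> transpose A = A"

fun mat2_pow :: "mat2 \<Rightarrow> nat \<Rightarrow> mat2" where
  "mat2_pow A 0 = mat 1"
| "mat2_pow A (Suc k) = A ** mat2_pow A k"

definition mat2_exp :: "mat2 \<Rightarrow> mat2" where
  "mat2_exp A = (\<Sum>k. (1 / fact k) *\<^sub>R mat2_pow A k)"

text \<open>Matrix logarithm: the unique symmetric logarithm (for symmetric positive definite input).\<close>
definition mat2_log :: "mat2 \<Rightarrow> mat2" where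
  "mat2_log P = (THE S. sym2 S \<and> mat2_exp S = P)"

definition is_eigenvalue2 :: "mat2 \<Rightarrow> real \<Rightarrow> bool" where
  "is_eigenvalue2 A t \<longleftrightarrow> (\<exists>v. v \<noteq> 0 \<and> A *v v = t *\<^sub>R v)"

definition same_eigenvalues :: "mat2 \<Rightarrow> mat2 \<Rightarrow> bool" where
  "same_eigenvalues A B \<longleftrightarrow> (\<forall>t. is_eigenvalue2 A t \<longleftrightarrow> is_eigenvalue2 B t)"

definition major_eigvec :: "mat2 \<Rightarrow> real^2 \<Rightarrow> bool" where
  "major_eigvec A u \<longleftrightarrow> norm u = 1 \<and>
     (\<exists>l. A *v u = l *\<^sub>R u \<and> (\<forall>t. is_eigenvalue2 A t \<longrightarrow> t \<le> l))"

definition generic_bases :: "('n \<Rightarrow> mat2) \<Rightarrow> bool" where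
  "generic_bases X \<longleftrightarrow> (\<exists>u. (\<forall>i. major_eigvec (X i) (u i)) \<and>
       (\<forall>i j. i \<noteq> j \<longrightarrow> u i \<noteq> u j \<and> u i \<noteq> - u j))"

definition Sup_LE :: "('n::finite \<Rightarrow> mat2) \<Rightarrow> mat2" where
  "Sup_LE X = lim (\<lambda>m::nat. (1 / real m) *\<^sub>R mat2_log (\<Sum>i\<in>UNIV. mat2_exp (real m *\<^sub>R X i)))"

definition converges_planar :: "(real \<Rightarrow> 'n \<Rightarrow> mat2) \<Rightarrow> ('n \<Rightarrow> mat2) \<Rightarrow> bool" where
  "converges_planar F X \<longleftrightarrow>
     (\<forall>i. ((\<lambda>\<delta>. F \<delta> i) \<longlongrightarrow> X i) (at_right 0)) \<and>
     (\<forall>\<delta>>0. \<forall>i. sym2 (F \<delta> i) \<and> same_eigenvalues (F \<delta> i) (X i))"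

definition Sup_RLE :: "('n::finite \<Rightarrow> mat2) \<Rightarrow> mat2" where
  "Sup_RLE X = (if generic_bases X then Sup_LE X
     else (THE M. \<forall>F. converges_planar F X \<and> (\<forall>\<delta>>0. generic_bases (F \<delta>)) \<longrightarrow>
                        ((\<lambda>\<delta>. Sup_LE (F \<delta>)) \<longlongrightarrow> M) (at_right 0)))"

end

theory Submission
  imports Defs
begin

definition outer :: "real^2 \<Rightarrow> mat2" where "outer u = (\<chi> i j. u$i * u$j)"
definition spec2 :: "real \<Rightarrow> real \<Rightarrow> real^2 \<Rightarrow> mat2" where
  "spec2 a b u = b *\<^sub>R mat 1 + (a - b) *\<^sub>R outer u"
lemma mat2_eq: "(A::mat2) = B \<longleftrightarrow> A$1$1 = B$1$1 \<and> A$1$2 = B$1$2 \<and> A$2$1 = B$2$1 \<and> A$2$2 = B$2$2"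
  by (auto simp: vec_eq_iff forall_2)
lemma vec2_eq: "(u::real^2) = v \<longleftrightarrow> u$1 = v$1 \<and> u$2 = v$2"
  by (auto simp: vec_eq_iff forall_2)
lemma unit2: "norm (u::real^2) = 1 \<longleftrightarrow> (u$1)^2 + (u$2)^2 = 1"
  by (simp add: norm_eq_sqrt_inner inner_vec_def sum_2 power2_eq_square)
lemma mult2: "((A::mat2) ** B)$i$j = A$i$1 * B$1$j + A$i$2 * B$2$j"
  by (simp add: matrix_matrix_mult_def sum_2)
lemma mulv2: "((A::mat2) *v v)$i = A$i$1 * v$1 + A$i$2 * v$2"
  by (simp add: matrix_vector_mult_def sum_2)
lemma mat1_2: "(mat 1 :: mat2)$1$1 = 1" "(mat 1 :: mat2)$1$2 = 0" "(mat 1 :: mat2)$2$1 = 0" "(mat 1 :: mat2)$2$2 = 1"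
  by (simp_all add: mat_def)
lemma spec2_comp: "spec2 a b u $ i $ j = (if i = j then b else 0) + (a - b) * u$i * u$j"
  by (simp add: spec2_def outer_def mat_def)
lemma spec2_mult: assumes "norm u = 1" shows "spec2 a b u ** spec2 c d u = spec2 (a*c) (b*d) u"
proof -
  from assms have u: "(u$1)^2 + (u$2)^2 = 1" by (simp add: unit2)
  have e: "(u$1)^2 = 1 - (u$2)^2" using u by simp
  show ?thesis unfolding mat2_eq mult2 spec2_comp
    apply (simp add: algebra_simps)
    using u by algebra
qed
lemma spec2_pow: assumes "norm u = 1" shows "mat2_pow (spec2 a b u) k = spec2 (a^k) (b^k) u"
proof (induction k)
  case 0 then show ?case by (simp add: spec2_def mat2_eq mat1_2)
next
  case (Suc k)
  then show ?case using spec2_mult[OF assms] by simp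
qed

lemma spec2_alt: "spec2 a b u = b *\<^sub>R mat 1 + (a - b) *\<^sub>R outer u" by (simp add: spec2_def)

lemma spec2_exp: assumes "norm u = 1" shows "mat2_exp (spec2 a b u) = spec2 (exp a) (exp b) u"
proof -
  have t: "(1 / fact k) *\<^sub>R mat2_pow (spec2 a b u) k =
     (b^k /\<^sub>R fact k) *\<^sub>R mat 1 + (a^k /\<^sub>R fact k - b^k /\<^sub>R fact k) *\<^sub>R outer u" for k
    unfolding spec2_pow[OF assms] by (simp add: spec2_def algebra_simps divide_simps flip: scaleR_add_left)
  have "(\<lambda>k. (b^k /\<^sub>R fact k) *\<^sub>R mat 1 + (a^k /\<^sub>R fact k - b^k /\<^sub>R fact k) *\<^sub>R (outer u :: mat2))
     sums (exp b *\<^sub>R mat 1 + (exp a - exp b) *\<^sub>R outer u)"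
    by (intro sums_add sums_scaleR_left sums_diff exp_converges)
  then have "(\<lambda>k. (1 / fact k) *\<^sub>R mat2_pow (spec2 a b u) k) sums spec2 (exp a) (exp b) u"
    unfolding t by (simp add: spec2_def)
  then show ?thesis unfolding mat2_exp_def by (rule sums_unique[symmetric])
qed


definition lam :: "mat2 \<Rightarrow> real" where
  "lam M = (M$1$1 + M$2$2)/2 + sqrt (((M$1$1 - M$2$2)/2)^2 + (M$1$2)^2)"
definition mu :: "mat2 \<Rightarrow> real" where
  "mu M = (M$1$1 + M$2$2)/2 - sqrt (((M$1$1 - M$2$2)/2)^2 + (M$1$2)^2)"

lemma mu_le_lam: "mu M \<le> lam M" by (simp add: lam_def mu_def)

lemma sym2_iff: "sym2 M \<longleftrightarrow> M$1$2 = M$2$1"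
  by (auto simp: sym2_def mat2_eq transpose_def)

lemma sym2_spec2: "sym2 (spec2 a b u)" by (simp add: sym2_iff spec2_comp)

lemma lam_mu_spec2: assumes "norm u = 1" "b \<le> a"
  shows "lam (spec2 a b u) = a" "mu (spec2 a b u) = b"
proof -
  from assms have u: "(u$1)^2 + (u$2)^2 = 1" by (simp add: unit2)
  have "((spec2 a b u$1$1 - spec2 a b u$2$2)/2)^2 + (spec2 a b u$1$2)^2 = ((a-b)/2)^2"
  proof -
    have "((a - b) * u $ 1 * u $ 1 - (a - b) * u $ 2 * u $ 2)^2 + 4 * ((a - b) * u $ 1 * u $ 2)^2 = (a-b)^2"
      using u by algebra
    then show ?thesis unfolding spec2_comp by (simp add: power_divide field_simps)
  qed
  then have s: "sqrt (((spec2 a b u$1$1 - spec2 a b u$2$2)/2)^2 + (spec2 a b u$1$2)^2) = (a-b)/2"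
    using assms by simp
  have t: "spec2 a b u$1$1 + spec2 a b u$2$2 = a + b"
    unfolding spec2_comp apply simp using u by algebra
  show "lam (spec2 a b u) = a" unfolding lam_def s t by (simp add: field_simps)
  show "mu (spec2 a b u) = b" unfolding mu_def s t by (simp add: field_simps)
qed

lemma sym_decomp: assumes "sym2 M"
  shows "\<exists>u. norm u = 1 \<and> M = spec2 (lam M) (mu M) u"
proof -
  define d where "d = (M$1$1 - M$2$2)/2"
  define b where "b = M$1$2"
  define r where "r = sqrt (d^2 + b^2)"
  define t where "t = (M$1$1 + M$2$2)/2"
  have lm: "lam M = t + r" "mu M = t - r" by (simp_all add: lam_def mu_def r_def d_def b_def t_def)
  have M21: "M$2$1 = b" using assms by (simp add: sym2_iff b_def)
  show ?thesis
  proof (cases "r = 0")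
    case True
    then have "d = 0" "b = 0" by (simp_all add: r_def)
    then have "M = spec2 (lam M) (mu M) (vector [1,0])"
      using True M21 unfolding mat2_eq spec2_comp lm by (simp add: d_def b_def t_def)
    moreover have "norm (vector [1,0] :: real^2) = 1" by (simp add: unit2)
    ultimately show ?thesis by blast
  next
    case False
    have "r \<ge> 0" by (simp add: r_def)
    then have rpos: "r > 0" using False by simp
    have r2: "r^2 = d^2 + b^2" unfolding r_def by simp
    have "(d/r)^2 + (b/r)^2 = (d^2 + b^2) / r^2" by (simp add: power_divide add_divide_distrib)
    also have "\<dots> = 1" using rpos by (simp add: r2[symmetric])
    finally have "(d/r)^2 + (b/r)^2 = 1" .
    then obtain th where th: "d/r = cos th" "b/r = sin th" using sincos_total_2pi by metis
    define u :: "real^2" where "u = vector [cos (th/2), sin (th/2)]"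
    have nu: "norm u = 1" by (simp add: unit2 u_def)
    have c2: "cos th = 2 * (cos (th/2))^2 - 1" "cos th = 1 - 2 * (sin (th/2))^2" "sin th = 2 * sin (th/2) * cos (th/2)"
    proof -
      have "(sin (th/2))^2 + (cos (th/2))^2 = 1" by simp
      moreover have "cos th = (cos (th/2))^2 - (sin (th/2))^2" using cos_double[of "th/2"] by simp
      moreover have "sin th = 2 * sin (th/2) * cos (th/2)" using sin_double[of "th/2"] by simp
      ultimately show "cos th = 2 * (cos (th/2))^2 - 1" "cos th = 1 - 2 * (sin (th/2))^2" "sin th = 2 * sin (th/2) * cos (th/2)"
        by linarith+
    qed
    have dd: "d = r * cos th" "b = r * sin th" using th rpos by (simp_all add: field_simps)
    have e1: "M$1$1 = t + d" "M$2$2 = t - d" by (simp_all add: t_def d_def field_simps)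
    have f1: "d = 2 * r * (cos (th/2))^2 - r" "d = r - 2 * r * (sin (th/2))^2" "b = 2 * r * sin (th/2) * cos (th/2)"
      using dd c2 by (metis (no_types) left_diff_distrib' mult.commute mult.left_commute right_diff_distrib mult_1_left mult_1_right mult.assoc)+
    define c where "c = cos (th/2)"
    define s where "s = sin (th/2)"
    have g: "((t+r)-(t-r)) * c * c = 2 * r * c^2" "((t+r)-(t-r)) * s * s = 2 * r * s^2"
      "((t+r)-(t-r)) * c * s = 2 * r * s * c" "((t+r)-(t-r)) * s * c = 2 * r * s * c"
      by (simp_all add: algebra_simps power2_eq_square)
    have "M = spec2 (lam M) (mu M) u"
      unfolding mat2_eq spec2_comp lm u_def
      using M21 e1 f1 unfolding b_def c_def[symmetric] s_def[symmetric] by (simp add: power2_eq_square algebra_simps)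
    then show ?thesis using nu by blast
  qed
qed

lemma scalar_fun_aux:
  fixes x y A B d p q :: real and g :: "real \<Rightarrow> real"
  assumes e: "y*d + (x-y)*p = B*d + (A-B)*q" and c: "(x=A \<and> y=B) \<or> (x=B \<and> y=A)"
  shows "g y * d + (g x - g y)*p = g B * d + (g A - g B)*q"
  using c
proof
  assume h: "x = A \<and> y = B"
  show ?thesis
  proof (cases "A = B")
    case False
    have "(A - B) * (p - q) = 0" using e h by (simp add: algebra_simps)
    then have "p = q" using False by simp
    then show ?thesis using h by simp
  qed (use h in simp)
next
  assume h: "x = B \<and> y = A"
  show ?thesis
  proof (cases "A = B")
    case False
    have "(B - A) * (p + q - d) = 0" using e h by (simp add: algebra_simps)
    then have pq: "p = d - q" using False by simp
    have "g A * d + (g B - g A) * (d - q) = g B * d + (g A - g B) * q" by algebra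
    then show ?thesis using h pq by simp
  qed (use h in simp)
qed

lemma spec2_trace: assumes "norm u = 1" shows "spec2 a b u $1$1 + spec2 a b u $2$2 = a + b"
proof -
  from assms have u: "(u$1)^2 + (u$2)^2 = 1" by (simp add: unit2)
  show ?thesis unfolding spec2_comp apply simp using u by algebra
qed

lemma spec2_det: assumes "norm u = 1" shows "spec2 a b u $1$1 * spec2 a b u $2$2 - spec2 a b u $1$2 * spec2 a b u $2$1 = a * b"
proof -
  from assms have u: "(u$1)^2 + (u$2)^2 = 1" by (simp add: unit2)
  show ?thesis unfolding spec2_comp apply simp using u by algebra
qed

lemma spec2_fun:
  assumes w: "norm w = 1" and q: "norm q = 1" and e: "spec2 x y w = spec2 A B q"
  shows "spec2 (g x) (g y) w = spec2 (g A) (g B) q"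
proof -
  have tr: "x + y = A + B" using spec2_trace[OF w, of x y] spec2_trace[OF q, of A B] e by simp
  have dt: "x * y = A * B" using spec2_det[OF w, of x y] spec2_det[OF q, of A B] e by simp
  have "(x - A) * (x - B) = 0"
  proof -
    have "y = A + B - x" using tr by simp
    then show ?thesis using dt by algebra
  qed
  then have c: "(x=A \<and> y=B) \<or> (x=B \<and> y=A)" using tr by auto
  have comp: "\<And>i j. spec2 x y w $i$j = spec2 A B q $i$j" using e by simp
  show ?thesis
    unfolding vec_eq_iff spec2_comp
  proof (intro allI)
    fix i j :: 2
    have "y * (if i = j then 1 else 0) + (x - y) * (w$i*w$j) = B * (if i = j then 1 else 0) + (A - B) * (q$i*q$j)"
      using comp[of i j] unfolding spec2_comp by (simp add: mult.assoc split: if_splits)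
    from scalar_fun_aux[OF this c, of g] show "(if i = j then g y else 0) + (g x - g y) * w $ i * w $ j =
      (if i = j then g B else 0) + (g A - g B) * q $ i * q $ j" by (simp add: mult.assoc split: if_splits)
  qed
qed

lemma log_spec2: assumes q: "norm q = 1" and A: "A > 0" and B: "B > 0"
  shows "mat2_log (spec2 A B q) = spec2 (ln A) (ln B) q"
  unfolding mat2_log_def
proof (rule the_equality)
  show "sym2 (spec2 (ln A) (ln B) q) \<and> mat2_exp (spec2 (ln A) (ln B) q) = spec2 A B q"
    using A B by (simp add: sym2_spec2 spec2_exp[OF q])
next
  fix S assume S: "sym2 S \<and> mat2_exp S = spec2 A B q"
  obtain w where w: "norm w = 1" "S = spec2 (lam S) (mu S) w" using sym_decomp S by blast
  have "spec2 (exp (lam S)) (exp (mu S)) w = spec2 A B q"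
    using S w spec2_exp[OF w(1)] by metis
  from spec2_fun[OF w(1) q this, of ln] show "S = spec2 (ln A) (ln B) q"
    using w by simp
qed



definition perp :: "real^2 \<Rightarrow> real^2" where "perp u = vector [- (u$2), u$1]"

lemma inner2: "inner (u::real^2) v = u$1 * v$1 + u$2 * v$2"
  by (simp add: inner_vec_def sum_2)

lemma perp_comp[simp]: "perp u $ 1 = - (u$2)" "perp u $ 2 = u$1" by (simp_all add: perp_def)

lemma norm_perp: "norm (perp u) = norm u"
  by (simp add: norm_eq_sqrt_inner inner2 algebra_simps)

lemma inner_perp: "inner u (perp u) = 0" by (simp add: inner2 algebra_simps)

lemma parseval: assumes "norm u = 1" shows "(inner u v)^2 + (inner (perp u) v)^2 = (norm v)^2"
proof -
  from assms have u: "(u$1)^2 + (u$2)^2 = 1" by (simp add: unit2)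
  have "(norm v)^2 = (v$1)^2 + (v$2)^2" by (simp add: norm_eq_sqrt_inner inner2 power2_eq_square)
  then show ?thesis unfolding inner2 perp_comp using u by algebra
qed

lemma spec2_mulv: "spec2 a b u *v v = b *\<^sub>R v + ((a-b) * inner u v) *\<^sub>R u"
  by (simp add: vec2_eq mulv2 spec2_comp inner2 algebra_simps)

lemma spec2_qf: "inner v (spec2 a b u *v v) = b * (inner v v) + (a-b) * (inner u v)^2"
  by (simp add: spec2_mulv inner_add_right inner_commute power2_eq_square)

lemma inner_sq_le: assumes "norm u = 1" "norm v = 1" shows "(inner u v)^2 \<le> 1"
proof -
  have "\<bar>inner u v\<bar> \<le> 1" using Cauchy_Schwarz_ineq2[of u v] assms by simp
  then show ?thesis by (simp add: abs_square_le_1)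
qed

lemma spec2_qf_unit: assumes "norm u = 1" "norm v = 1"
  shows "inner v (spec2 a b u *v v) = b + (a-b) * (inner u v)^2"
  using assms by (simp add: spec2_qf inner_commute dot_square_norm)

lemma spec2_qf_bounds: assumes "norm u = 1" "norm v = 1" "b \<le> a"
  shows "b \<le> inner v (spec2 a b u *v v)" "inner v (spec2 a b u *v v) \<le> a"
proof -
  have c: "0 \<le> (inner u v)^2" "(inner u v)^2 \<le> 1" using inner_sq_le[OF assms(1,2)] by simp_all
  have z: "0 \<le> (a - b) * (inner u v)^2" using c assms(3) by simp
  have "(a - b) * (inner u v)^2 \<le> (a-b) * 1"
    by (rule mult_left_mono) (use c assms(3) in simp_all)
  then show "b \<le> inner v (spec2 a b u *v v)" "inner v (spec2 a b u *v v) \<le> a"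
    using spec2_qf_unit[OF assms(1,2)] z by simp_all
qed

lemma sym_qf_bounds: assumes "sym2 M" "norm v = 1"
  shows "mu M \<le> inner v (M *v v)" "inner v (M *v v) \<le> lam M"
proof -
  obtain u where u: "norm u = 1" "M = spec2 (lam M) (mu M) u" using sym_decomp[OF assms(1)] by blast
  show "mu M \<le> inner v (M *v v)" "inner v (M *v v) \<le> lam M"
    using spec2_qf_bounds[OF u(1) assms(2) mu_le_lam] u(2) by metis+
qed

lemma sym_qf_attain: assumes "sym2 M"
  shows "\<exists>v. norm v = 1 \<and> inner v (M *v v) = lam M" "\<exists>v. norm v = 1 \<and> inner v (M *v v) = mu M"
proof -
  obtain u where u: "norm u = 1" "M = spec2 (lam M) (mu M) u" using sym_decomp[OF assms(1)] by blast
  have "inner u (M *v u) = lam M" using u spec2_qf_unit[OF u(1) u(1), of "lam M" "mu M"]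
    by (simp add: dot_square_norm)
  then show "\<exists>v. norm v = 1 \<and> inner v (M *v v) = lam M" using u by blast
  have "inner (perp u) (M *v perp u) = mu M" using u spec2_qf_unit[OF u(1), of "perp u" "lam M" "mu M"]
    by (simp add: norm_perp inner_perp)
  then show "\<exists>v. norm v = 1 \<and> inner v (M *v v) = mu M" using u norm_perp by metis
qed

lemma eig_spec2: assumes u: "norm u = 1"
  shows "is_eigenvalue2 (spec2 a b u) t \<longleftrightarrow> t = a \<or> t = b"
proof
  assume "is_eigenvalue2 (spec2 a b u) t"
  then obtain v where v: "v \<noteq> 0" "spec2 a b u *v v = t *\<^sub>R v" by (auto simp: is_eigenvalue2_def)
  have e: "(t - b) *\<^sub>R v = ((a-b) * inner u v) *\<^sub>R u" using v(2) unfolding spec2_mulv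
    by (simp add: algebra_simps)
  have uu: "inner u u = 1" using u by (simp add: dot_square_norm)
  have e1: "(t - b) * inner u v = (a-b) * inner u v"
    using arg_cong[OF e, of "inner u"] uu by simp
  have e2: "(t - b) * inner (perp u) v = 0"
    using arg_cong[OF e, of "inner (perp u)"] by (simp add: inner_commute inner_perp)
  show "t = a \<or> t = b"
  proof (rule ccontr)
    assume "\<not> (t = a \<or> t = b)"
    then have "inner u v = 0" "inner (perp u) v = 0" using e1 e2 by (auto simp: algebra_simps)
    then have "norm v = 0" using parseval[OF u, of v] by simp
    then show False using v(1) by simp
  qed
next
  have uu: "inner u u = 1" using u by (simp add: dot_square_norm)
  assume "t = a \<or> t = b"
  then show "is_eigenvalue2 (spec2 a b u) t"
  proof
    assume "t = a"
    have "spec2 a b u *v u = a *\<^sub>R u" unfolding spec2_mulv uu by (simp add: algebra_simps)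
    moreover have "u \<noteq> 0" using u by auto
    ultimately show ?thesis unfolding is_eigenvalue2_def using \<open>t = a\<close> by blast
  next
    assume "t = b"
    have "spec2 a b u *v perp u = b *\<^sub>R perp u" unfolding spec2_mulv by (simp add: inner_perp)
    moreover have "perp u \<noteq> 0" using u norm_perp[of u] by auto
    ultimately show ?thesis unfolding is_eigenvalue2_def using \<open>t = b\<close> by blast
  qed
qed

lemma major_spec2: assumes "norm w = 1" "b \<le> a" shows "major_eigvec (spec2 a b w) w"
proof -
  have uu: "inner w w = 1" using assms by (simp add: dot_square_norm)
  have "spec2 a b w *v w = a *\<^sub>R w" unfolding spec2_mulv uu by (simp add: algebra_simps)
  then show ?thesis unfolding major_eigvec_def using assms eig_spec2[OF assms(1)] by auto
qed

lemma major_decomp: assumes S: "sym2 X" and m: "major_eigvec X u"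
  shows "X = spec2 (lam X) (mu X) u"
proof -
  obtain w where w: "norm w = 1" "X = spec2 (lam X) (mu X) w" using sym_decomp[OF S] by blast
  from m obtain l where u: "norm u = 1" and l: "X *v u = l *\<^sub>R u" "\<forall>t. is_eigenvalue2 X t \<longrightarrow> t \<le> l"
    unfolding major_eigvec_def by blast
  have ev: "is_eigenvalue2 X t \<longleftrightarrow> t = lam X \<or> t = mu X" for t using eig_spec2[OF w(1)] w(2) by metis
  have "u \<noteq> 0" using u by auto
  then have "is_eigenvalue2 X l" using l(1) unfolding is_eigenvalue2_def by blast
  then have l1: "l = lam X \<or> l = mu X" using ev by blast
  have "lam X \<le> l" using l(2) ev by blast
  then have ll: "l = lam X" using l1 mu_le_lam[of X] by auto
  show ?thesis
  proof (cases "lam X = mu X")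
    case True
    then show ?thesis using w by (simp add: spec2_def)
  next
    case False
    have e: "spec2 (lam X) (mu X) w *v u = lam X *\<^sub>R u" using l(1) ll w(2) by metis
    then have "((lam X - mu X) * inner w u) *\<^sub>R w = (lam X - mu X) *\<^sub>R u"
      unfolding spec2_mulv by (simp add: algebra_simps)
    then have uw: "u = inner w u *\<^sub>R w" using False
      by (metis (no_types, lifting) eq_iff_diff_eq_0 scaleR_cancel_left scaleR_scaleR)
    have "(inner w u)^2 = 1"
    proof -
      have "norm u = \<bar>inner w u\<bar> * norm w" using uw by (metis norm_scaleR)
      then show ?thesis using u w(1) by (simp add: abs_eq_iff power2_eq_square) (metis mult_minus_right mult_1_right minus_minus mult_cancel_right1 abs_mult_self_eq abs_1)
    qed
    then have "outer u = outer w"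
      by (subst uw) (simp add: outer_def vec_eq_iff algebra_simps power2_eq_square)
    then show ?thesis using w by (simp add: spec2_def)
  qed
qed



definition ev :: "('n \<Rightarrow> mat2) \<Rightarrow> 'n \<times> bool \<Rightarrow> real" where
  "ev X p = (if snd p then lam (X (fst p)) else mu (X (fst p)))"
definition L1 :: "('n::finite \<Rightarrow> mat2) \<Rightarrow> real" where
  "L1 X = Max (range (\<lambda>i. lam (X i)))"
definition L2 :: "('n::finite \<Rightarrow> mat2) \<Rightarrow> real" where
  "L2 X = Max ((\<lambda>(p,q). min (ev X p) (ev X q)) ` {(p,q). p \<noteq> q})"
definition kk :: "('n::finite \<Rightarrow> mat2) \<Rightarrow> 'n" where
  "kk X = (SOME k. lam (X k) = L1 X)"
definition Phi :: "mat2 \<Rightarrow> mat2" where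
  "Phi M = (1 / (lam M - mu M)) *\<^sub>R (M - ((lam M + mu M)/2) *\<^sub>R mat 1)"
definition G :: "('n::finite \<Rightarrow> mat2) \<Rightarrow> mat2" where
  "G X = ((L1 X + L2 X)/2) *\<^sub>R mat 1 + (L1 X - L2 X) *\<^sub>R Phi (X (kk X))"

lemma pairs_fin: "finite {(p::'n::finite \<times> bool, q). p \<noteq> q}" by (rule finite_subset[of _ UNIV]) auto
lemma pairs_ne: "{(p::'n::finite \<times> bool, q). p \<noteq> q} \<noteq> {}"
proof -
  obtain i :: 'n where True by blast
  have "((i,True),(i,False)) \<in> {(p::'n \<times> bool, q). p \<noteq> q}" by simp
  then show ?thesis by (metis empty_iff)
qed

lemma lam_le_L1: "lam (X i) \<le> L1 (X::'n::finite \<Rightarrow> mat2)"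
  unfolding L1_def by (rule Max_ge) auto

lemma ev_le_L1: "ev X p \<le> L1 (X::'n::finite \<Rightarrow> mat2)"
  unfolding ev_def using lam_le_L1[of X "fst p"] mu_le_lam[of "X (fst p)"] by auto

lemma L1_attain: "\<exists>k. lam (X k) = L1 (X::'n::finite \<Rightarrow> mat2)"
proof -
  have "L1 X \<in> range (\<lambda>i. lam (X i))" unfolding L1_def by (rule Max_in) auto
  then show ?thesis by auto
qed

lemma kk: "lam (X (kk X)) = L1 (X::'n::finite \<Rightarrow> mat2)"
  unfolding kk_def using L1_attain[of X] by (rule someI_ex)

lemma ev_le_L2: assumes k: "lam (X k) = L1 (X::'n::finite \<Rightarrow> mat2)" and p: "p \<noteq> (k, True)"
  shows "ev X p \<le> L2 X"
proof -
  have "ev X (k,True) = L1 X" using k by (simp add: ev_def)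
  then have "min (ev X p) (ev X (k,True)) = ev X p" using ev_le_L1[of X p] by simp
  moreover have "min (ev X p) (ev X (k,True)) \<le> L2 X"
    unfolding L2_def by (rule Max_ge) (use p in force)+
  ultimately show ?thesis by simp
qed

lemma L2_le_L1: "L2 X \<le> L1 (X::'n::finite \<Rightarrow> mat2)"
proof -
  have "L2 X \<in> (\<lambda>(p,q). min (ev X p) (ev X q)) ` {(p,q). p \<noteq> q}"
    unfolding L2_def by (rule Max_in) (use pairs_ne in auto)
  then obtain p q where "L2 X = min (ev X p) (ev X q)" by auto
  then show ?thesis using ev_le_L1[of X p] by linarith
qed

lemma L2_attain: assumes k: "lam (X k) = L1 (X::'n::finite \<Rightarrow> mat2)"
  shows "L2 X \<le> mu (X k) \<or> (\<exists>j. j \<noteq> k \<and> L2 X \<le> lam (X j))"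
proof -
  have "L2 X \<in> (\<lambda>(p,q). min (ev X p) (ev X q)) ` {(p,q). p \<noteq> q}"
    unfolding L2_def by (rule Max_in) (use pairs_ne in auto)
  then obtain z where z: "L2 X = (\<lambda>(p,q). min (ev X p) (ev X q)) z" "z \<in> {(p,q). p \<noteq> q}" by (rule imageE)
  obtain p q where "z = (p,q)" by (cases z)
  then have pq: "p \<noteq> q" "L2 X = min (ev X p) (ev X q)" using z by auto
  have "\<exists>r. r \<noteq> (k,True) \<and> L2 X \<le> ev X r"
  proof (cases "p = (k,True)")
    case True
    then have "q \<noteq> (k,True)" using pq by auto
    moreover have "L2 X \<le> ev X q" using pq by simp
    ultimately show ?thesis by blast
  next
    case False
    moreover have "L2 X \<le> ev X p" using pq by simp
    ultimately show ?thesis by blast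
  qed
  then obtain r where r: "r \<noteq> (k,True)" "L2 X \<le> ev X r" by blast
  obtain j b where rr: "r = (j,b)" by (cases r)
  show ?thesis
  proof (cases "j = k")
    case True
    then have "\<not> b" using r rr by auto
    then show ?thesis using r rr True by (simp add: ev_def)
  next
    case False
    have "ev X r \<le> lam (X j)" using rr mu_le_lam[of "X j"] by (simp add: ev_def)
    then show ?thesis using r False by force
  qed
qed

lemma lam_scale: "c \<ge> 0 \<Longrightarrow> lam (c *\<^sub>R M) = c * lam M"
proof -
  assume c: "c \<ge> 0"
  have "sqrt (((c * M$1$1 - c * M$2$2)/2)^2 + (c * M$1$2)^2) = c * sqrt (((M$1$1 - M$2$2)/2)^2 + (M$1$2)^2)"
  proof -
    have "((c * M$1$1 - c * M$2$2)/2)^2 + (c * M$1$2)^2 = c^2 * (((M$1$1 - M$2$2)/2)^2 + (M$1$2)^2)"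
      by (simp add: algebra_simps power2_eq_square)
    then show ?thesis using c by (simp add: real_sqrt_mult)
  qed
  then show ?thesis using c by (simp add: lam_def algebra_simps)
qed

lemma mu_scale: "c \<ge> 0 \<Longrightarrow> mu (c *\<^sub>R M) = c * mu M"
proof -
  assume c: "c \<ge> 0"
  have "sqrt (((c * M$1$1 - c * M$2$2)/2)^2 + (c * M$1$2)^2) = c * sqrt (((M$1$1 - M$2$2)/2)^2 + (M$1$2)^2)"
  proof -
    have "((c * M$1$1 - c * M$2$2)/2)^2 + (c * M$1$2)^2 = c^2 * (((M$1$1 - M$2$2)/2)^2 + (M$1$2)^2)"
      by (simp add: algebra_simps power2_eq_square)
    then show ?thesis using c by (simp add: real_sqrt_mult)
  qed
  then show ?thesis using c by (simp add: mu_def algebra_simps)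
qed

lemma Phi_scale: "c > 0 \<Longrightarrow> Phi (c *\<^sub>R M) = Phi M"
proof -
  assume c: "c > 0"
  have e1: "c *\<^sub>R M - ((c*lam M + c*mu M)/2) *\<^sub>R mat 1 = c *\<^sub>R (M - ((lam M + mu M)/2) *\<^sub>R mat 1)"
    by (simp add: algebra_simps)
  have e2: "c*lam M - c*mu M = c * (lam M - mu M)" by (simp add: algebra_simps)
  have e3: "1 / (c * x) * c = 1 / x" for x using c by simp
  show ?thesis unfolding Phi_def lam_scale[OF less_imp_le[OF c]] mu_scale[OF less_imp_le[OF c]] e1 e2
    by (simp only: scaleR_scaleR e3)
qed

lemma Phi_spec2: assumes "norm u = 1" "b < a" shows "Phi (spec2 a b u) = outer u - (1/2) *\<^sub>R mat 1"
proof -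
  have "spec2 a b u - ((a + b)/2) *\<^sub>R mat 1 = (a - b) *\<^sub>R (outer u - (1/2) *\<^sub>R mat 1)"
    by (simp add: spec2_def algebra_simps scaleR_add_left[symmetric] del: scaleR_add_left) (simp add: field_simps)
  then show ?thesis unfolding Phi_def lam_mu_spec2[OF assms(1) less_imp_le[OF assms(2)]] using assms(2)
    by simp
qed

lemma norm_mat2_le: "norm (M::mat2) \<le> \<bar>M$1$1\<bar> + \<bar>M$1$2\<bar> + \<bar>M$2$1\<bar> + \<bar>M$2$2\<bar>"
proof -
  have "norm M \<le> (\<Sum>i\<in>UNIV. norm (M$i))" by (simp add: norm_vec_def L2_set_le_sum)
  also have "\<dots> \<le> (\<Sum>i\<in>UNIV. \<Sum>j\<in>UNIV. \<bar>M$i$j\<bar>)" by (intro sum_mono norm_le_l1_cart)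
  finally show ?thesis by (simp add: sum_2 algebra_simps)
qed

lemma Phi_bound: assumes "sym2 M" shows "norm (Phi M) \<le> 2"
proof -
  define d where "d = (M$1$1 - M$2$2)/2"
  define b where "b = M$1$2"
  define r where "r = sqrt (d^2 + b^2)"
  have lm: "lam M - mu M = 2 * r" "(lam M + mu M)/2 = (M$1$1 + M$2$2)/2"
    by (simp_all add: lam_def mu_def r_def d_def b_def)
  have M21: "M$2$1 = b" using assms by (simp add: sym2_iff b_def)
  have dr: "\<bar>d\<bar> \<le> r" "\<bar>b\<bar> \<le> r" unfolding r_def
    by (metis real_sqrt_abs real_sqrt_le_mono le_add_same_cancel1 le_add_same_cancel2 zero_le_power2)+
  have e: "\<bar>x\<bar> \<le> r \<Longrightarrow> \<bar>x / (2*r)\<bar> \<le> 1/2" for x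
    by (cases "r = 0") (simp_all add: abs_divide field_simps)
  have c: "Phi M $1$1 = d / (2*r)" "Phi M $2$2 = - d / (2*r)" "Phi M $1$2 = b / (2*r)" "Phi M $2$1 = b / (2*r)"
  proof -
    have h: "M$1$1 - (M$1$1+M$2$2)/2 = d" "M$2$2 - (M$1$1+M$2$2)/2 = -d" by (simp_all add: d_def field_simps)
    show "Phi M $1$1 = d / (2*r)" "Phi M $2$2 = - d / (2*r)" "Phi M $1$2 = b / (2*r)" "Phi M $2$1 = b / (2*r)"
      unfolding Phi_def lm using M21 h by (simp_all add: mat_def b_def)
  qed
  have "norm (Phi M) \<le> 1/2 + 1/2 + 1/2 + 1/2"
    using norm_mat2_le[of "Phi M"] e[OF dr(1)] e[OF dr(2)] unfolding c by (simp add: abs_minus_cancel)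
  then show ?thesis by simp
qed



lemma tendsto_entry: "(f \<longlongrightarrow> (L::mat2)) F \<Longrightarrow> ((\<lambda>x. f x $ i $ j) \<longlongrightarrow> L$i$j) F"
  by (intro tendsto_vec_nth)

lemma tendsto_lam: "(f \<longlongrightarrow> L) F \<Longrightarrow> ((\<lambda>x. lam (f x)) \<longlongrightarrow> lam L) F"
  unfolding lam_def by (intro tendsto_intros tendsto_entry) auto

lemma tendsto_mu: "(f \<longlongrightarrow> L) F \<Longrightarrow> ((\<lambda>x. mu (f x)) \<longlongrightarrow> mu L) F"
  unfolding mu_def by (intro tendsto_intros tendsto_entry) auto

lemma tendsto_Max_fin:
  fixes f :: "'s \<Rightarrow> 'a \<Rightarrow> real"
  assumes "finite S" "S \<noteq> {}" "\<And>s. s \<in> S \<Longrightarrow> ((\<lambda>x. f s x) \<longlongrightarrow> l s) F"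
  shows "((\<lambda>x. Max ((\<lambda>s. f s x) ` S)) \<longlongrightarrow> Max (l ` S)) F"
  using assms
proof (induction S rule: finite_ne_induct)
  case (singleton s) then show ?case by simp
next
  case (insert s S)
  have "((\<lambda>x. max (f s x) (Max ((\<lambda>s. f s x) ` S))) \<longlongrightarrow> max (l s) (Max (l ` S))) F"
    using insert by (intro tendsto_max) auto
  then show ?case using insert by simp
qed

lemma tendsto_L1: assumes "\<And>i. ((\<lambda>x. Y x i) \<longlongrightarrow> X0 i) F"
  shows "((\<lambda>x. L1 (Y x :: 'n::finite \<Rightarrow> mat2)) \<longlongrightarrow> L1 X0) F"
  unfolding L1_def using assms by (intro tendsto_Max_fin tendsto_lam) auto

lemma tendsto_ev: assumes "\<And>i. ((\<lambda>x. Y x i) \<longlongrightarrow> X0 i) F"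
  shows "((\<lambda>x. ev (Y x) p) \<longlongrightarrow> ev X0 p) F"
  unfolding ev_def using assms by (cases "snd p") (auto intro: tendsto_lam tendsto_mu)

lemma tendsto_L2: assumes "\<And>i. ((\<lambda>x. Y x i) \<longlongrightarrow> X0 i) F"
  shows "((\<lambda>x. L2 (Y x :: 'n::finite \<Rightarrow> mat2)) \<longlongrightarrow> L2 X0) F"
proof -
  have "((\<lambda>x. Max ((\<lambda>s. (\<lambda>(p,q). min (ev (Y x) p) (ev (Y x) q)) s) ` {(p::'n \<times> bool,q). p \<noteq> q}))
     \<longlongrightarrow> Max ((\<lambda>(p,q). min (ev X0 p) (ev X0 q)) ` {(p,q). p \<noteq> q})) F"
    by (rule tendsto_Max_fin[OF pairs_fin pairs_ne])
       (auto simp: case_prod_beta intro!: tendsto_min tendsto_ev assms)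
  then show ?thesis unfolding L2_def .
qed

lemma tendsto_Phi: assumes "(f \<longlongrightarrow> M0) F" "lam M0 \<noteq> mu M0"
  shows "((\<lambda>x. Phi (f x)) \<longlongrightarrow> Phi M0) F"
  unfolding Phi_def using assms by (intro tendsto_intros tendsto_lam tendsto_mu) auto

lemma G_tendsto:
  fixes Y :: "'a \<Rightarrow> 'n::finite \<Rightarrow> mat2"
  assumes lim: "\<And>i. ((\<lambda>x. Y x i) \<longlongrightarrow> X0 i) F"
    and sy: "eventually (\<lambda>x. \<forall>i. sym2 (Y x i)) F"
  shows "((\<lambda>x. G (Y x)) \<longlongrightarrow> G X0) F"
proof -
  have l1: "((\<lambda>x. L1 (Y x)) \<longlongrightarrow> L1 X0) F" by (rule tendsto_L1[OF lim])
  have l2: "((\<lambda>x. L2 (Y x)) \<longlongrightarrow> L2 X0) F" by (rule tendsto_L2[OF lim])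
  show ?thesis
  proof (cases "L2 X0 < L1 X0")
    case True
    define k0 where "k0 = kk X0"
    have k0: "lam (X0 k0) = L1 X0" unfolding k0_def by (rule kk)
    have evp: "eventually (\<lambda>x. ev (Y x) p < ev (Y x) (k0,True)) F" if p: "p \<noteq> (k0,True)" for p
    proof -
      have "ev X0 p \<le> L2 X0" by (rule ev_le_L2[OF k0 p])
      moreover have "ev X0 (k0,True) = L1 X0" using k0 by (simp add: ev_def)
      ultimately have "0 < ev X0 (k0,True) - ev X0 p" using True by simp
      moreover have "((\<lambda>x. ev (Y x) (k0,True) - ev (Y x) p) \<longlongrightarrow> ev X0 (k0,True) - ev X0 p) F"
        by (intro tendsto_diff tendsto_ev lim)
      ultimately have "eventually (\<lambda>x. 0 < ev (Y x) (k0,True) - ev (Y x) p) F"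
        by (rule order_tendstoD(1)[rotated])
      then show ?thesis by simp
    qed
    have "\<forall>p. eventually (\<lambda>x. p \<noteq> (k0,True) \<longrightarrow> ev (Y x) p < ev (Y x) (k0,True)) F"
    proof
      fix p :: "'n \<times> bool"
      show "eventually (\<lambda>x. p \<noteq> (k0,True) \<longrightarrow> ev (Y x) p < ev (Y x) (k0,True)) F"
      proof (cases "p = (k0,True)")
        case True then show ?thesis by simp
      next
        case False
        show ?thesis using evp[OF False] by (rule eventually_mono) simp
      qed
    qed
    then have "eventually (\<lambda>x. \<forall>p. p \<noteq> (k0,True) \<longrightarrow> ev (Y x) p < ev (Y x) (k0,True)) F"
      by (intro eventually_all_finite) auto
    then have ev_eq: "eventually (\<lambda>x. G (Y x) = ((L1 (Y x) + L2 (Y x))/2) *\<^sub>R mat 1 + (L1 (Y x) - L2 (Y x)) *\<^sub>R Phi (Y x k0)) F"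
    proof (rule eventually_mono)
      fix x assume h: "\<forall>p. p \<noteq> (k0,True) \<longrightarrow> ev (Y x) p < ev (Y x) (k0,True)"
      have "kk (Y x) = k0"
      proof (rule ccontr)
        assume ne: "kk (Y x) \<noteq> k0"
        have "lam (Y x k0) \<le> L1 (Y x)" by (rule lam_le_L1)
        moreover have "lam (Y x (kk (Y x))) < lam (Y x k0)"
          using h[rule_format, of "(kk (Y x), True)"] ne by (simp add: ev_def)
        ultimately show False using kk[of "Y x"] by simp
      qed
      then show "G (Y x) = ((L1 (Y x) + L2 (Y x))/2) *\<^sub>R mat 1 + (L1 (Y x) - L2 (Y x)) *\<^sub>R Phi (Y x k0)"
        unfolding G_def by simp
    qed
    have "mu (X0 k0) \<le> L2 X0" using ev_le_L2[OF k0, of "(k0,False)"] by (simp add: ev_def)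
    then have ne: "lam (X0 k0) \<noteq> mu (X0 k0)" using k0 True by simp
    have "((\<lambda>x. ((L1 (Y x) + L2 (Y x))/2) *\<^sub>R mat 1 + (L1 (Y x) - L2 (Y x)) *\<^sub>R Phi (Y x k0)) \<longlongrightarrow>
           ((L1 X0 + L2 X0)/2) *\<^sub>R mat 1 + (L1 X0 - L2 X0) *\<^sub>R Phi (X0 k0)) F"
      by (intro tendsto_intros l1 l2 tendsto_Phi[OF lim ne]) auto
    then have "((\<lambda>x. ((L1 (Y x) + L2 (Y x))/2) *\<^sub>R mat 1 + (L1 (Y x) - L2 (Y x)) *\<^sub>R Phi (Y x k0)) \<longlongrightarrow> G X0) F"
      unfolding G_def k0_def .
    moreover have "eventually (\<lambda>x. ((L1 (Y x) + L2 (Y x))/2) *\<^sub>R mat 1 + (L1 (Y x) - L2 (Y x)) *\<^sub>R Phi (Y x k0) = G (Y x)) F"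
      using ev_eq by (rule eventually_mono) simp
    ultimately show ?thesis by (rule Lim_transform_eventually)
  next
    case False
    then have eq: "L2 X0 = L1 X0" using L2_le_L1[of X0] by simp
    have gx: "G X0 = L1 X0 *\<^sub>R mat 1 + 0" unfolding G_def eq by simp
    have t1: "((\<lambda>x. ((L1 (Y x) + L2 (Y x))/2) *\<^sub>R (mat 1 :: mat2)) \<longlongrightarrow> L1 X0 *\<^sub>R mat 1) F"
    proof -
      have "((\<lambda>x. ((L1 (Y x) + L2 (Y x))/2) *\<^sub>R (mat 1 :: mat2)) \<longlongrightarrow> ((L1 X0 + L2 X0)/2) *\<^sub>R mat 1) F"
        by (intro tendsto_intros l1 l2) auto
      then show ?thesis unfolding eq by simp
    qed
    have t2: "((\<lambda>x. (L1 (Y x) - L2 (Y x)) *\<^sub>R Phi (Y x (kk (Y x)))) \<longlongrightarrow> 0) F"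
    proof (rule Lim_null_comparison)
      show "eventually (\<lambda>x. norm ((L1 (Y x) - L2 (Y x)) *\<^sub>R Phi (Y x (kk (Y x)))) \<le> \<bar>L1 (Y x) - L2 (Y x)\<bar> * 2) F"
        using sy by (rule eventually_mono) (simp add: mult_left_mono Phi_bound)
      have "((\<lambda>x. \<bar>L1 (Y x) - L2 (Y x)\<bar> * 2) \<longlongrightarrow> \<bar>L1 X0 - L2 X0\<bar> * 2) F"
        by (intro tendsto_intros l1 l2)
      then show "((\<lambda>x. \<bar>L1 (Y x) - L2 (Y x)\<bar> * 2) \<longlongrightarrow> 0) F" unfolding eq by simp
    qed
    have "((\<lambda>x. ((L1 (Y x) + L2 (Y x))/2) *\<^sub>R (mat 1 :: mat2) + (L1 (Y x) - L2 (Y x)) *\<^sub>R Phi (Y x (kk (Y x))))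
       \<longlongrightarrow> L1 X0 *\<^sub>R mat 1 + 0) F" by (rule tendsto_add[OF t1 t2])
    moreover have "(\<lambda>x. G (Y x)) = (\<lambda>x. ((L1 (Y x) + L2 (Y x))/2) *\<^sub>R (mat 1 :: mat2) + (L1 (Y x) - L2 (Y x)) *\<^sub>R Phi (Y x (kk (Y x))))"
      by (simp add: G_def fun_eq_iff)
    ultimately show ?thesis unfolding gx by simp
  qed
qed



lemma scaleR_spec2: "c *\<^sub>R spec2 a b u = spec2 (c*a) (c*b) u"
  by (simp add: spec2_def algebra_simps)

lemma spec2_zero: "spec2 0 0 u = 0" by (simp add: spec2_def)

lemma sym2_sum: "(\<And>i. i \<in> S \<Longrightarrow> sym2 (M i)) \<Longrightarrow> sym2 (\<Sum>i\<in>S. M i)"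
  by (simp add: sym2_iff)

lemma qf_sum: "inner v ((\<Sum>i\<in>S. M i) *v v) = (\<Sum>i\<in>S. inner v (M i *v v))"
proof (induction S rule: infinite_finite_induct)
  case (infinite A) then show ?case by simp
next
  case empty then show ?case by simp
next
  case (insert x F) then show ?case by (simp add: matrix_vector_mult_add_rdistrib inner_add_right)
qed

lemma exp_neg_lim: "d < 0 \<Longrightarrow> (\<lambda>m::nat. exp (real m * d)) \<longlonglongrightarrow> 0"
proof -
  assume d: "d < 0"
  have "(\<lambda>m::nat. exp d ^ m) \<longlonglongrightarrow> 0" using d by (intro LIMSEQ_power_zero) simp
  then show ?thesis by (simp add: exp_of_nat_mult)
qed

definition det2 :: "real^2 \<Rightarrow> real^2 \<Rightarrow> real" where "det2 u w = u$1 * w$2 - u$2 * w$1"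

lemma det2_zero_aligned: assumes "norm u = 1" "norm w = 1" "det2 u w = 0" shows "u = w \<or> u = -w"
proof -
  have u: "(u$1)^2 + (u$2)^2 = 1" and w: "(w$1)^2 + (w$2)^2 = 1" using assms by (simp_all add: unit2)
  have d: "u$1 * w$2 = u$2 * w$1" using assms(3) by (simp add: det2_def)
  define c where "c = u$1 * w$1 + u$2 * w$2"
  have c2: "c^2 = 1" unfolding c_def using u w d by algebra
  have "(u$1 - c * w$1)^2 + (u$2 - c*w$2)^2 = 0" unfolding c_def using u w d c2[unfolded c_def] by algebra
  then have "u$1 = c * w$1" "u$2 = c * w$2" by (simp_all add: sum_power2_eq_zero_iff)
  moreover have "c = 1 \<or> c = -1" using c2 by (simp add: power2_eq_1_iff)
  ultimately show ?thesis by (auto simp: vec2_eq)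
qed

lemma det2_bound: assumes "norm u = 1" "norm w = 1" "norm v = 1"
  shows "(det2 u w)^2 \<le> 2 * ((inner u v)^2 + (inner w v)^2)"
proof -
  have id: "det2 u w = inner u v * inner w (perp v) - inner u (perp v) * inner w v"
  proof -
    have "(v$1)^2 + (v$2)^2 = 1" using assms by (simp add: unit2)
    then show ?thesis unfolding det2_def inner2 perp_comp by algebra
  qed
  have b1: "\<bar>inner w (perp v)\<bar> \<le> 1" "\<bar>inner u (perp v)\<bar> \<le> 1"
    using Cauchy_Schwarz_ineq2[of w "perp v"] Cauchy_Schwarz_ineq2[of u "perp v"] assms norm_perp[of v] by simp_all
  have "\<bar>det2 u w\<bar> \<le> \<bar>inner u v\<bar> * \<bar>inner w (perp v)\<bar> + \<bar>inner u (perp v)\<bar> * \<bar>inner w v\<bar>"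
    unfolding id by (metis abs_mult abs_triangle_ineq4)
  also have "\<dots> \<le> \<bar>inner u v\<bar> + \<bar>inner w v\<bar>"
    using b1 by (intro add_mono) (auto intro: mult_left_le mult_right_le_one_le mult_le_one simp: mult_le_cancel_left1 mult.commute)
  finally have "\<bar>det2 u w\<bar> \<le> \<bar>inner u v\<bar> + \<bar>inner w v\<bar>" .
  then have "(det2 u w)^2 \<le> (\<bar>inner u v\<bar> + \<bar>inner w v\<bar>)^2"
    by (metis abs_ge_zero power2_abs power_mono)
  also have "\<dots> \<le> 2 * ((inner u v)^2 + (inner w v)^2)"
    using sum_squares_bound[of "\<bar>inner u v\<bar>" "\<bar>inner w v\<bar>"]
    by (simp add: power2_sum algebra_simps)
  finally show ?thesis .
qed

lemma log_formula: assumes "sym2 P" "mu P > 0"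
  shows "mat2_log P = ((ln (lam P) + ln (mu P))/2) *\<^sub>R mat 1 + (ln (lam P) - ln (mu P)) *\<^sub>R Phi P"
proof -
  obtain q where q: "norm q = 1" "P = spec2 (lam P) (mu P) q" using sym_decomp[OF assms(1)] by blast
  have lp: "lam P > 0" using assms(2) mu_le_lam[of P] by linarith
  have l: "mat2_log P = spec2 (ln (lam P)) (ln (mu P)) q" using log_spec2[OF q(1) lp assms(2)] q(2) by metis
  show ?thesis
  proof (cases "lam P = mu P")
    case True
    then show ?thesis unfolding l by (simp add: spec2_def)
  next
    case False
    then have lt: "mu P < lam P" using mu_le_lam[of P] by simp
    have ph: "Phi P = outer q - (1/2) *\<^sub>R mat 1" using Phi_spec2[OF q(1) lt] q(2) by metis
    show ?thesis unfolding l spec2_def ph by (simp add: vec_eq_iff mat_def field_simps)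
  qed
qed



lemma tendsto_spec2: "(f \<longlongrightarrow> a) F \<Longrightarrow> (g \<longlongrightarrow> b) F \<Longrightarrow> ((\<lambda>x. spec2 (f x) (g x) u) \<longlongrightarrow> spec2 a b u) F"
  unfolding spec2_def by (intro tendsto_intros)

lemma Sup_LE_generic:
  fixes X :: "'n::finite \<Rightarrow> mat2"
  assumes sym: "\<forall>i. sym2 (X i)" and gen: "generic_bases X"
  shows "Sup_LE X = G X"
proof -
  obtain u where um: "\<forall>i. major_eigvec (X i) (u i)" and na: "\<forall>i j. i \<noteq> j \<longrightarrow> u i \<noteq> u j \<and> u i \<noteq> - u j"
    using gen unfolding generic_bases_def by blast
  have un: "norm (u i) = 1" for i using um unfolding major_eigvec_def by blast
  define a where "a i = lam (X i)" for i
  define b where "b i = mu (X i)" for i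
  have Xd: "X i = spec2 (a i) (b i) (u i)" for i unfolding a_def b_def using major_decomp sym um by blast
  have ba: "b i \<le> a i" for i by (simp add: a_def b_def mu_le_lam)
  define k where "k = kk X"
  have ak: "a k = L1 X" unfolding a_def k_def by (rule kk)
  have kk': "lam (X k) = L1 X" using ak a_def by simp
  have aL1: "a i \<le> L1 X" for i unfolding a_def by (rule lam_le_L1)
  have aL2: "i \<noteq> k \<Longrightarrow> a i \<le> L2 X" for i using ev_le_L2[OF kk', of "(i,True)"] by (simp add: ev_def a_def)
  have bL2: "b k \<le> L2 X" using ev_le_L2[OF kk', of "(k,False)"] by (simp add: ev_def b_def)
  define P where "P m = (\<Sum>i\<in>UNIV. mat2_exp (real m *\<^sub>R X i))" for m :: nat
  define ea where "ea m i = exp (real m * a i)" for m :: nat and i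
  define eb where "eb m i = exp (real m * b i)" for m :: nat and i
  have Pd: "P m = (\<Sum>i\<in>UNIV. spec2 (ea m i) (eb m i) (u i))" for m
    unfolding P_def ea_def eb_def by (simp add: Xd scaleR_spec2 spec2_exp[OF un])
  have eba: "eb m i \<le> ea m i" for m i unfolding ea_def eb_def using ba[of i] by (simp add: mult_left_mono)
  have ebpos: "eb m i > 0" for m i unfolding eb_def by simp
  have Psym: "sym2 (P m)" for m unfolding Pd by (intro sym2_sum sym2_spec2)
  define tm where "tm m i v = inner v (spec2 (ea m i) (eb m i) (u i) *v v)" for m i v
  have qfP: "inner v (P m *v v) = (\<Sum>i\<in>UNIV. tm m i v)" for m v unfolding Pd qf_sum tm_def ..
  have tm_lo: "eb m i \<le> tm m i v" and tm_hi: "tm m i v \<le> ea m i" if "norm v = 1" for m i v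
    unfolding tm_def using spec2_qf_bounds[OF un that eba] by simp_all
  have tm_ge0: "0 \<le> tm m i v" if "norm v = 1" for m i v using tm_lo[OF that, of m i] ebpos[of m i] by simp
  have tm_ge: "ea m i * (inner (u i) v)^2 \<le> tm m i v" if "norm v = 1" for m i v
  proof -
    have c: "0 \<le> (inner (u i) v)^2" "(inner (u i) v)^2 \<le> 1" using inner_sq_le[OF un that] by simp_all
    have "tm m i v = eb m i * (1 - (inner (u i) v)^2) + ea m i * (inner (u i) v)^2"
      unfolding tm_def spec2_qf_unit[OF un that] by (simp add: algebra_simps)
    moreover have "0 \<le> eb m i * (1 - (inner (u i) v)^2)" using c ebpos[of m i] by simp
    ultimately show ?thesis by simp
  qed
  have tm_perp: "tm m i (perp (u i)) = eb m i" for m i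
    unfolding tm_def using spec2_qf_unit[OF un, of "perp (u i)"] by (simp add: norm_perp un inner_perp)
  have tm_self: "tm m i (u i) = ea m i" for m i
    unfolding tm_def using spec2_qf_unit[OF un un] by (simp add: dot_square_norm un)
  define A where "A m = lam (P m)" for m
  define B where "B m = mu (P m)" for m
  define N where "N = real CARD('n)"
  have Npos: "N > 0" unfolding N_def by simp
  have A_ge: "exp (real m * L1 X) \<le> A m" for m
  proof -
    have "exp (real m * L1 X) = tm m k (u k)" using tm_self ak ea_def by simp
    also have "\<dots> \<le> (\<Sum>i\<in>UNIV. tm m i (u k))"
      by (rule member_le_sum) (auto intro: tm_ge0 un)
    also have "\<dots> \<le> A m" unfolding A_def qfP[symmetric] by (rule sym_qf_bounds[OF Psym un])
    finally show ?thesis .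
  qed
  have A_le: "A m \<le> N * exp (real m * L1 X)" for m
  proof -
    obtain v where v: "norm v = 1" "inner v (P m *v v) = lam (P m)" using sym_qf_attain(1)[OF Psym] by blast
    have "A m = (\<Sum>i\<in>UNIV. tm m i v)" unfolding A_def v(2)[symmetric] qfP ..
    also have "\<dots> \<le> (\<Sum>i\<in>(UNIV::'n set). exp (real m * L1 X))"
    proof (rule sum_mono)
      fix i :: 'n
      have "tm m i v \<le> ea m i" by (rule tm_hi[OF v(1)])
      also have "\<dots> \<le> exp (real m * L1 X)" unfolding ea_def using aL1[of i] by (simp add: mult_left_mono)
      finally show "tm m i v \<le> exp (real m * L1 X)" .
    qed
    also have "\<dots> = N * exp (real m * L1 X)" by (simp add: N_def)
    finally show ?thesis .
  qed
  have B_le: "B m \<le> N * exp (real m * L2 X)" for m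
  proof -
    have w: "norm (perp (u k)) = 1" by (simp add: norm_perp un)
    have "B m \<le> (\<Sum>i\<in>UNIV. tm m i (perp (u k)))" unfolding B_def qfP[symmetric] by (rule sym_qf_bounds[OF Psym w])
    also have "\<dots> \<le> (\<Sum>i\<in>(UNIV::'n set). exp (real m * L2 X))"
    proof (rule sum_mono)
      fix i :: 'n
      show "tm m i (perp (u k)) \<le> exp (real m * L2 X)"
      proof (cases "i = k")
        case True
        then show ?thesis using tm_perp[of m k] bL2 unfolding eb_def by (simp add: mult_left_mono)
      next
        case False
        have "tm m i (perp (u k)) \<le> ea m i" by (rule tm_hi[OF w])
        also have "\<dots> \<le> exp (real m * L2 X)" unfolding ea_def using aL2[OF False] by (simp add: mult_left_mono)
        finally show ?thesis .
      qed
    qed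
    also have "\<dots> = N * exp (real m * L2 X)" by (simp add: N_def)
    finally show ?thesis .
  qed
  have "\<exists>c>0. \<forall>m. c * exp (real m * L2 X) \<le> B m"
  proof (cases "L2 X \<le> mu (X k)")
    case True
    have "exp (real m * L2 X) \<le> B m" for m
    proof -
      obtain w where w: "norm w = 1" "inner w (P m *v w) = mu (P m)" using sym_qf_attain(2)[OF Psym] by blast
      have "exp (real m * L2 X) \<le> eb m k" unfolding eb_def b_def using True by (simp add: mult_left_mono)
      also have "\<dots> \<le> tm m k w" by (rule tm_lo[OF w(1)])
      also have "\<dots> \<le> (\<Sum>i\<in>UNIV. tm m i w)" by (rule member_le_sum) (auto intro: tm_ge0 w(1))
      also have "\<dots> = B m" unfolding B_def w(2)[symmetric] qfP ..
      finally show ?thesis .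
    qed
    then show ?thesis by (intro exI[of _ 1]) simp
  next
    case False
    then obtain j where j: "j \<noteq> k" "L2 X \<le> lam (X j)" using L2_attain[OF kk'] by auto
    have dne: "det2 (u k) (u j) \<noteq> 0" using det2_zero_aligned[OF un un, of k j] na j(1) by metis
    define c where "c = (det2 (u k) (u j))^2 / 2"
    have cpos: "c > 0" using dne by (simp add: c_def)
    have "c * exp (real m * L2 X) \<le> B m" for m
    proof -
      obtain w where w: "norm w = 1" "inner w (P m *v w) = mu (P m)" using sym_qf_attain(2)[OF Psym] by blast
      define e where "e = exp (real m * L2 X)"
      have e1: "e \<le> ea m k" unfolding e_def ea_def ak using L2_le_L1[of X] by (simp add: mult_left_mono)
      have e2: "e \<le> ea m j" unfolding e_def ea_def a_def using j(2) by (simp add: mult_left_mono)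
      have "c * e \<le> e * ((inner (u k) w)^2 + (inner (u j) w)^2)"
        using det2_bound[OF un un w(1), of k j] unfolding c_def e_def by (simp add: mult.commute)
      also have "\<dots> = e * (inner (u k) w)^2 + e * (inner (u j) w)^2" by (simp add: algebra_simps)
      also have "\<dots> \<le> ea m k * (inner (u k) w)^2 + ea m j * (inner (u j) w)^2"
        using e1 e2 by (intro add_mono mult_right_mono) simp_all
      also have "\<dots> \<le> tm m k w + tm m j w" by (intro add_mono tm_ge w(1))
      also have "\<dots> = (\<Sum>i\<in>{k,j}. tm m i w)" using j(1) by simp
      also have "\<dots> \<le> (\<Sum>i\<in>UNIV. tm m i w)" by (rule sum_mono2) (auto intro: tm_ge0 w(1))
      also have "\<dots> = B m" unfolding B_def w(2)[symmetric] qfP ..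
      finally show ?thesis unfolding e_def .
    qed
    then show ?thesis using cpos by blast
  qed
  then obtain c where cpos: "c > 0" and B_ge: "\<And>m. c * exp (real m * L2 X) \<le> B m" by blast
  have Bpos: "B m > 0" for m using B_ge[of m] cpos by (smt (verit) exp_gt_zero mult_pos_pos)
  have Apos: "A m > 0" for m using A_ge[of m] by (smt (verit) exp_gt_zero)
  define al where "al m = ln (A m) / real m" for m
  define be where "be m = ln (B m) / real m" for m
  have seq: "(1 / real m) *\<^sub>R mat2_log (P m) = ((al m + be m)/2) *\<^sub>R mat 1 + (al m - be m) *\<^sub>R Phi (P m)" for m
    unfolding log_formula[OF Psym Bpos[unfolded B_def]] al_def be_def A_def[symmetric] B_def[symmetric]
    by (simp add: scaleR_add_right add_divide_distrib diff_divide_distrib)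
  have al_lim: "al \<longlonglongrightarrow> L1 X"
  proof (rule tendsto_sandwich)
    show "eventually (\<lambda>m. L1 X \<le> al m) sequentially"
    proof (rule eventually_sequentiallyI[of 1])
      fix m :: nat assume "1 \<le> m"
      then have mp: "real m > 0" by simp
      have "real m * L1 X \<le> ln (A m)" using A_ge[of m] Apos[of m] by (metis ln_exp ln_le_cancel_iff exp_gt_zero)
      then show "L1 X \<le> al m" unfolding al_def using mp by (simp add: field_simps)
    qed
    show "eventually (\<lambda>m. al m \<le> L1 X + ln N / real m) sequentially"
    proof (rule eventually_sequentiallyI[of 1])
      fix m :: nat assume "1 \<le> m"
      then have mp: "real m > 0" by simp
      have "ln (A m) \<le> ln (N * exp (real m * L1 X))" using A_le[of m] Apos[of m] by simp
      also have "\<dots> = ln N + real m * L1 X" using Npos by (simp add: ln_mult)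
      finally show "al m \<le> L1 X + ln N / real m" unfolding al_def using mp by (simp add: field_simps)
    qed
    show "(\<lambda>m. L1 X) \<longlonglongrightarrow> L1 X" by simp
    show "(\<lambda>m. L1 X + ln N / real m) \<longlonglongrightarrow> L1 X" using tendsto_add[OF tendsto_const lim_const_over_n[of "ln N"]] by simp
  qed
  have be_lim: "be \<longlonglongrightarrow> L2 X"
  proof (rule tendsto_sandwich)
    show "eventually (\<lambda>m. L2 X + ln c / real m \<le> be m) sequentially"
    proof (rule eventually_sequentiallyI[of 1])
      fix m :: nat assume "1 \<le> m"
      then have mp: "real m > 0" by simp
      have "ln c + real m * L2 X = ln (c * exp (real m * L2 X))" using cpos by (simp add: ln_mult)
      also have "\<dots> \<le> ln (B m)" using B_ge[of m] cpos Bpos[of m] by (subst ln_le_cancel_iff) auto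
      finally have "(ln c + real m * L2 X) / real m \<le> ln (B m) / real m" using mp by (intro divide_right_mono) simp_all
      moreover have "(ln c + real m * L2 X) / real m = L2 X + ln c / real m" using mp by (simp add: field_simps)
      ultimately show "L2 X + ln c / real m \<le> be m" unfolding be_def by simp
    qed
    show "eventually (\<lambda>m. be m \<le> L2 X + ln N / real m) sequentially"
    proof (rule eventually_sequentiallyI[of 1])
      fix m :: nat assume "1 \<le> m"
      then have mp: "real m > 0" by simp
      have "ln (B m) \<le> ln (N * exp (real m * L2 X))" using B_le[of m] Bpos[of m] by simp
      also have "\<dots> = ln N + real m * L2 X" using Npos by (simp add: ln_mult)
      finally show "be m \<le> L2 X + ln N / real m" unfolding be_def using mp by (simp add: field_simps)
    qed
    show "(\<lambda>m. L2 X + ln c / real m) \<longlonglongrightarrow> L2 X" using tendsto_add[OF tendsto_const lim_const_over_n[of "ln c"]] by simp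
    show "(\<lambda>m. L2 X + ln N / real m) \<longlonglongrightarrow> L2 X" using tendsto_add[OF tendsto_const lim_const_over_n[of "ln N"]] by simp
  qed
  have main: "(\<lambda>m. (1 / real m) *\<^sub>R mat2_log (P m)) \<longlonglongrightarrow> G X"
  proof (cases "L2 X < L1 X")
    case True
    define E where "E m = exp (- (real m * L1 X)) *\<^sub>R P m" for m
    have Ed: "E m = (\<Sum>i\<in>UNIV. spec2 (exp (real m * (a i - L1 X))) (exp (real m * (b i - L1 X))) (u i))" for m
      unfolding E_def Pd scaleR_sum_right scaleR_spec2 ea_def eb_def
      by (simp add: exp_add[symmetric] algebra_simps)
    have lima: "(\<lambda>m. exp (real m * (a i - L1 X))) \<longlonglongrightarrow> (if i = k then 1 else 0)" for i
    proof (cases "i = k")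
      case True then show ?thesis using ak by simp
    next
      case False then show ?thesis using aL2[OF False] True by (simp add: exp_neg_lim)
    qed
    have limb: "(\<lambda>m. exp (real m * (b i - L1 X))) \<longlonglongrightarrow> 0" for i
    proof (cases "i = k")
      case True then show ?thesis using bL2 \<open>L2 X < L1 X\<close> by (simp add: exp_neg_lim)
    next
      case False then show ?thesis using aL2[OF False] ba[of i] \<open>L2 X < L1 X\<close> by (simp add: exp_neg_lim)
    qed
    have "E \<longlonglongrightarrow> (\<Sum>i\<in>UNIV. spec2 (if i = k then 1 else 0) 0 (u i))"
      unfolding Ed by (intro tendsto_sum tendsto_spec2 lima limb)
    also have "(\<Sum>i\<in>UNIV. spec2 (if i = k then 1 else 0) 0 (u i)) = (\<Sum>i\<in>UNIV. if i = k then spec2 1 0 (u k) else 0)"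
      by (intro sum.cong) (auto simp: spec2_zero)
    also have "\<dots> = spec2 1 0 (u k)" by simp
    finally have Elim: "E \<longlonglongrightarrow> spec2 1 0 (u k)" .
    have ne: "lam (spec2 1 0 (u k)) \<noteq> mu (spec2 1 0 (u k))" using lam_mu_spec2[OF un, of 0 1] by simp
    have PhiE: "Phi (P m) = Phi (E m)" for m unfolding E_def by (simp add: Phi_scale)
    have Phi_lim: "(\<lambda>m. Phi (P m)) \<longlonglongrightarrow> Phi (spec2 1 0 (u k))" unfolding PhiE by (rule tendsto_Phi[OF Elim ne])
    have bk: "b k < a k" using bL2 ak True by simp
    have "Phi (spec2 1 0 (u k)) = Phi (X k)" unfolding Xd[of k] Phi_spec2[OF un bk] Phi_spec2[OF un zero_less_one] ..
    then have "(\<lambda>m. ((al m + be m)/2) *\<^sub>R mat 1 + (al m - be m) *\<^sub>R Phi (P m)) \<longlonglongrightarrow>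
        ((L1 X + L2 X)/2) *\<^sub>R mat 1 + (L1 X - L2 X) *\<^sub>R Phi (X k)"
      using Phi_lim by (intro tendsto_intros al_lim be_lim) auto
    then show ?thesis unfolding seq G_def k_def .
  next
    case False
    then have eq: "L2 X = L1 X" using L2_le_L1[of X] by simp
    have t1: "(\<lambda>m. ((al m + be m)/2) *\<^sub>R (mat 1 :: mat2)) \<longlonglongrightarrow> L1 X *\<^sub>R mat 1"
    proof -
      have "(\<lambda>m. ((al m + be m)/2) *\<^sub>R (mat 1 :: mat2)) \<longlonglongrightarrow> ((L1 X + L2 X)/2) *\<^sub>R mat 1"
        by (intro tendsto_intros al_lim be_lim) auto
      then show ?thesis unfolding eq by simp
    qed
    have t2: "(\<lambda>m. (al m - be m) *\<^sub>R Phi (P m)) \<longlonglongrightarrow> 0"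
    proof (rule Lim_null_comparison)
      show "eventually (\<lambda>m. norm ((al m - be m) *\<^sub>R Phi (P m)) \<le> \<bar>al m - be m\<bar> * 2) sequentially"
        by (intro always_eventually allI) (simp add: mult_left_mono Phi_bound Psym)
      have "(\<lambda>m. \<bar>al m - be m\<bar> * 2) \<longlonglongrightarrow> \<bar>L1 X - L2 X\<bar> * 2" by (intro tendsto_intros al_lim be_lim)
      then show "(\<lambda>m. \<bar>al m - be m\<bar> * 2) \<longlonglongrightarrow> 0" unfolding eq by simp
    qed
    have gx: "G X = L1 X *\<^sub>R mat 1 + 0" unfolding G_def eq by simp
    show ?thesis unfolding seq gx by (rule tendsto_add[OF t1 t2])
  qed
  show ?thesis unfolding Sup_LE_def P_def[symmetric] using main by (rule limI)
qed



definition rot :: "real \<Rightarrow> real^2 \<Rightarrow> real^2" where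
  "rot th u = vector [cos th * u$1 - sin th * u$2, sin th * u$1 + cos th * u$2]"

lemma rot_comp [simp]: "rot th u $ 1 = cos th * u$1 - sin th * u$2" "rot th u $ 2 = sin th * u$1 + cos th * u$2"
  by (simp_all add: rot_def)

lemma norm_rot: "norm (rot th u) = norm u"
proof -
  have s: "(sin th)^2 + (cos th)^2 = 1" by simp
  have "(rot th u $ 1)^2 + (rot th u $ 2)^2 = (u$1)^2 + (u$2)^2" unfolding rot_comp using s by algebra
  then show ?thesis by (simp add: norm_eq_sqrt_inner inner2 power2_eq_square)
qed

lemma det2_rot: "det2 (rot a u) (rot b w) = cos (b - a) * det2 u w + sin (b - a) * inner u w"
  unfolding det2_def inner2 rot_comp cos_diff sin_diff by algebra

lemma det2_inner_sq: assumes "norm u = 1" "norm w = 1" shows "(det2 u w)^2 + (inner u w)^2 = 1"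
proof -
  have u: "(u$1)^2 + (u$2)^2 = 1" and w: "(w$1)^2 + (w$2)^2 = 1" using assms by (simp_all add: unit2)
  show ?thesis unfolding det2_def inner2 using u w by algebra
qed

lemma det2_self: "det2 v v = 0" "det2 v (-v) = 0" by (simp_all add: det2_def algebra_simps)

lemma ev_nonzero:
  fixes D I c :: real
  assumes DI: "D^2 + I^2 = 1" and c: "c \<noteq> 0"
  shows "eventually (\<lambda>t. cos (c * t) * D + sin (c * t) * I \<noteq> 0) (at_right 0)"
proof (cases "D = 0")
  case False
  have "((\<lambda>t. cos (c * t) * D + sin (c * t) * I) \<longlongrightarrow> cos (c * 0) * D + sin (c * 0) * I) (at_right 0)"
    by (intro tendsto_intros)
  then have "((\<lambda>t. cos (c * t) * D + sin (c * t) * I) \<longlongrightarrow> D) (at_right 0)" by simp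
  then show ?thesis using False by (rule tendsto_imp_eventually_ne)
next
  case True
  then have I: "I \<noteq> 0" using DI by auto
  have cp: "\<bar>c\<bar> > 0" using c by simp
  show ?thesis unfolding eventually_at_right_field
  proof (intro exI[of _ "pi / \<bar>c\<bar>"] conjI allI impI)
    show "0 < pi / \<bar>c\<bar>" using cp by simp
    fix y :: real assume y: "0 < y" "y < pi / \<bar>c\<bar>"
    have a1: "0 < \<bar>c\<bar> * y" using y cp by simp
    have a2: "\<bar>c\<bar> * y < pi" using y cp by (simp add: field_simps)
    have s: "sin (\<bar>c\<bar> * y) > 0" using a1 a2 by (rule sin_gt_zero)
    have "sin (c * y) \<noteq> 0"
    proof (cases "c > 0")
      case True then show ?thesis using s by simp
    next
      case False
      then have "c * y = - (\<bar>c\<bar> * y)" using c by simp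
      then show ?thesis using s by simp
    qed
    then show "cos (c * y) * D + sin (c * y) * I \<noteq> 0" using True I by simp
  qed
qed

lemma tendsto_rot:
  fixes g :: "'a::t2_space \<Rightarrow> real"
  assumes g: "(g \<longlongrightarrow> 0) F"
  shows "((\<lambda>x. spec2 a b (rot (g x) u)) \<longlongrightarrow> spec2 a b u) F"
proof -
  have c1: "((\<lambda>x. rot (g x) u $ 1) \<longlongrightarrow> u$1) F"
  proof -
    have "((\<lambda>x. cos (g x) * u$1 - sin (g x) * u$2) \<longlongrightarrow> cos 0 * u$1 - sin 0 * u$2) F"
      by (intro tendsto_intros g)
    then show ?thesis by simp
  qed
  have c2: "((\<lambda>x. rot (g x) u $ 2) \<longlongrightarrow> u$2) F"
  proof -
    have "((\<lambda>x. sin (g x) * u$1 + cos (g x) * u$2) \<longlongrightarrow> sin 0 * u$1 + cos 0 * u$2) F"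
      by (intro tendsto_intros g)
    then show ?thesis by simp
  qed
  have cc: "((\<lambda>x. rot (g x) u $ i) \<longlongrightarrow> u$i) F" for i using c1 c2 exhaust_2[of i] by auto
  have e: "spec2 a b v = (\<chi> i j. (if i = j then b else 0) + (a - b) * v$i * v$j)" for v
    by (simp add: vec_eq_iff spec2_comp)
  show ?thesis unfolding e
    by (intro tendsto_vec_lambda tendsto_intros cc)
qed

lemma exists_generic_family:
  fixes X :: "'n::finite \<Rightarrow> mat2"
  assumes sym: "\<forall>i. sym2 (X i)"
  shows "\<exists>F. converges_planar F X \<and> (\<forall>\<delta>>0. generic_bases (F \<delta>))"
proof -
  have "\<forall>i. \<exists>w. norm w = 1 \<and> X i = spec2 (lam (X i)) (mu (X i)) w" using sym sym_decomp by blast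
  then obtain w where w: "\<And>i. norm (w i) = 1" "\<And>i. X i = spec2 (lam (X i)) (mu (X i)) (w i)" by metis
  obtain f :: "'n \<Rightarrow> nat" where f: "inj f" using ex_inj by blast
  define kc where "kc i = real (f i)" for i
  have kcne: "i \<noteq> j \<Longrightarrow> kc j - kc i \<noteq> 0" for i j using f by (simp add: kc_def inj_eq)
  have dr: "det2 (rot (kc i * t) (w i)) (rot (kc j * t) (w j)) =
      cos ((kc j - kc i) * t) * det2 (w i) (w j) + sin ((kc j - kc i) * t) * inner (w i) (w j)" for i j t
    unfolding det2_rot by (simp add: algebra_simps)
  have "\<forall>p::'n \<times> 'n. eventually (\<lambda>t. fst p \<noteq> snd p \<longrightarrow> det2 (rot (kc (fst p) * t) (w (fst p))) (rot (kc (snd p) * t) (w (snd p))) \<noteq> 0) (at_right 0)"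
  proof
    fix p :: "'n \<times> 'n"
    obtain i j where p: "p = (i,j)" by (cases p)
    show "eventually (\<lambda>t. fst p \<noteq> snd p \<longrightarrow> det2 (rot (kc (fst p) * t) (w (fst p))) (rot (kc (snd p) * t) (w (snd p))) \<noteq> 0) (at_right 0)"
    proof (cases "i = j")
      case True then show ?thesis using p by simp
    next
      case False
      show ?thesis unfolding p dr
        using ev_nonzero[OF det2_inner_sq[OF w(1)[of i] w(1)[of j]] kcne[OF False]] by (rule eventually_mono) simp
    qed
  qed
  then have "eventually (\<lambda>t. \<forall>p::'n \<times> 'n. fst p \<noteq> snd p \<longrightarrow> det2 (rot (kc (fst p) * t) (w (fst p))) (rot (kc (snd p) * t) (w (snd p))) \<noteq> 0) (at_right 0)"
    by (intro eventually_all_finite) blast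
  then obtain eps :: real where eps: "eps > 0"
    and epsP: "\<And>t. 0 < t \<Longrightarrow> t < eps \<Longrightarrow> \<forall>i j. i \<noteq> j \<longrightarrow> det2 (rot (kc i * t) (w i)) (rot (kc j * t) (w j)) \<noteq> 0"
    unfolding eventually_at_right_field by auto
  define F where "F \<delta> i = spec2 (lam (X i)) (mu (X i)) (rot (kc i * min \<delta> (eps/2)) (w i))" for \<delta> i
  have nr: "norm (rot th (w i)) = 1" for th i by (simp add: norm_rot w(1))
  have cp: "converges_planar F X"
    unfolding converges_planar_def
  proof (intro conjI allI impI)
    fix i
    have "((\<lambda>\<delta>::real. kc i * min \<delta> (eps/2)) \<longlongrightarrow> kc i * min 0 (eps/2)) (at_right 0)"
      by (intro tendsto_intros)
    then have "((\<lambda>\<delta>::real. kc i * min \<delta> (eps/2)) \<longlongrightarrow> 0) (at_right 0)" using eps by simp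
    from tendsto_rot[OF this, of "lam (X i)" "mu (X i)" "w i"]
    show "((\<lambda>\<delta>. F \<delta> i) \<longlongrightarrow> X i) (at_right 0)" unfolding F_def using w(2)[of i] by simp
  next
    fix \<delta> :: real and i assume "\<delta> > 0"
    show "sym2 (F \<delta> i)" unfolding F_def by (rule sym2_spec2)
    show "same_eigenvalues (F \<delta> i) (X i)"
      unfolding same_eigenvalues_def F_def using eig_spec2[OF nr] eig_spec2[OF w(1)] w(2)[of i] by metis
  qed
  have gen: "generic_bases (F \<delta>)" if d: "\<delta> > 0" for \<delta>
    unfolding generic_bases_def
  proof (intro exI[of _ "\<lambda>i. rot (kc i * min \<delta> (eps/2)) (w i)"] conjI allI impI)
    fix i
    show "major_eigvec (F \<delta> i) (rot (kc i * min \<delta> (eps/2)) (w i))"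
      unfolding F_def by (rule major_spec2[OF nr mu_le_lam])
  next
    fix i j :: 'n assume ij: "i \<noteq> j"
    have ds: "\<And>a c. det2 a c \<noteq> 0 \<Longrightarrow> a \<noteq> c \<and> a \<noteq> -c" using det2_self by (metis minus_minus)
    have t: "0 < min \<delta> (eps/2)" "min \<delta> (eps/2) < eps" using d eps by auto
    have "det2 (rot (kc i * min \<delta> (eps/2)) (w i)) (rot (kc j * min \<delta> (eps/2)) (w j)) \<noteq> 0"
      using epsP[OF t] ij by blast
    then show "rot (kc i * min \<delta> (eps / 2)) (w i) \<noteq> rot (kc j * min \<delta> (eps / 2)) (w j)"
      "rot (kc i * min \<delta> (eps / 2)) (w i) \<noteq> - rot (kc j * min \<delta> (eps / 2)) (w j)"
      using ds by blast+
  qed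
  show ?thesis using cp gen by blast
qed

lemma Sup_RLE_eq:
  fixes X :: "'n::finite \<Rightarrow> mat2"
  assumes sym: "\<forall>i. sym2 (X i)"
  shows "Sup_RLE X = G X"
proof (cases "generic_bases X")
  case True
  then show ?thesis unfolding Sup_RLE_def using Sup_LE_generic[OF sym True] by simp
next
  case False
  have good: "((\<lambda>\<delta>. Sup_LE (F \<delta>)) \<longlongrightarrow> G X) (at_right 0)"
    if F: "converges_planar F X" "\<forall>\<delta>>0. generic_bases (F \<delta>)" for F :: "real \<Rightarrow> 'n \<Rightarrow> mat2"
  proof -
    have lim: "\<And>i. ((\<lambda>\<delta>. F \<delta> i) \<longlongrightarrow> X i) (at_right 0)" and sy: "\<And>\<delta> i. \<delta> > 0 \<Longrightarrow> sym2 (F \<delta> i)"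
      using F(1) unfolding converges_planar_def by auto
    have evs: "eventually (\<lambda>\<delta>. \<forall>i. sym2 (F \<delta> i)) (at_right (0::real))"
      using eventually_at_right_less[of "0::real"] by (rule eventually_mono) (simp add: sy)
    have "((\<lambda>\<delta>. G (F \<delta>)) \<longlongrightarrow> G X) (at_right 0)" by (rule G_tendsto[OF lim evs])
    moreover have "eventually (\<lambda>\<delta>. G (F \<delta>) = Sup_LE (F \<delta>)) (at_right (0::real))"
      using eventually_at_right_less[of "0::real"]
    proof (rule eventually_mono)
      fix \<delta> :: real assume "0 < \<delta>"
      then show "G (F \<delta>) = Sup_LE (F \<delta>)" using Sup_LE_generic[of "F \<delta>"] sy F(2) by simp
    qed
    ultimately show ?thesis by (rule Lim_transform_eventually)
  qed
  obtain F0 where F0: "converges_planar F0 X" "\<forall>\<delta>>0. generic_bases (F0 \<delta>)"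
    using exists_generic_family[OF sym] by blast
  have "(THE M. \<forall>F. converges_planar F X \<and> (\<forall>\<delta>>0. generic_bases (F \<delta>)) \<longrightarrow>
                        ((\<lambda>\<delta>. Sup_LE (F \<delta>)) \<longlongrightarrow> M) (at_right 0)) = G X"
  proof (rule the_equality)
    show "\<forall>F. converges_planar F X \<and> (\<forall>\<delta>>0. generic_bases (F \<delta>)) \<longrightarrow>
                        ((\<lambda>\<delta>. Sup_LE (F \<delta>)) \<longlongrightarrow> G X) (at_right 0)" using good by blast
  next
    fix M assume "\<forall>F. converges_planar F X \<and> (\<forall>\<delta>>0. generic_bases (F \<delta>)) \<longrightarrow>
                        ((\<lambda>\<delta>. Sup_LE (F \<delta>)) \<longlongrightarrow> M) (at_right 0)"
    then have "((\<lambda>\<delta>. Sup_LE (F0 \<delta>)) \<longlongrightarrow> M) (at_right 0)" using F0 by blast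
    moreover have "((\<lambda>\<delta>. Sup_LE (F0 \<delta>)) \<longlongrightarrow> G X) (at_right 0)" using good[OF F0] .
    ultimately show "M = G X" by (rule tendsto_unique[rotated 1]) simp
  qed
  then show ?thesis unfolding Sup_RLE_def using False by simp
qed

theorem lemma9:
  shows "continuous_on {Xs :: mat2^'n::finite. \<forall>i. sym2 (Xs $ i)}
           (\<lambda>Xs. Sup_RLE (\<lambda>i. Xs $ i))"
proof (rule continuous_on_eq)
  show "continuous_on {Xs :: mat2^'n::finite. \<forall>i. sym2 (Xs $ i)} (\<lambda>Xs. G (\<lambda>i. Xs $ i))"
    unfolding continuous_on_def
  proof (intro ballI)
    fix x :: "mat2^'n" assume x: "x \<in> {Xs. \<forall>i. sym2 (Xs $ i)}"
    show "((\<lambda>Xs. G (\<lambda>i. Xs $ i)) \<longlongrightarrow> G (\<lambda>i. x $ i)) (at x within {Xs. \<forall>i. sym2 (Xs $ i)})"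
    proof (rule G_tendsto)
      show "((\<lambda>Xs. Xs $ i) \<longlongrightarrow> x $ i) (at x within {Xs. \<forall>i. sym2 (Xs $ i)})" for i
        by (intro tendsto_vec_nth tendsto_ident_at)
      show "eventually (\<lambda>Xs. \<forall>i. sym2 (Xs $ i)) (at x within {Xs. \<forall>i. sym2 (Xs $ i)})"
        unfolding eventually_at_filter by simp
    qed
  qed
next
  fix Xs :: "mat2^'n" assume "Xs \<in> {Xs. \<forall>i. sym2 (Xs $ i)}"
  then show "G (\<lambda>i. Xs $ i) = Sup_RLE (\<lambda>i. Xs $ i)" using Sup_RLE_eq[of "\<lambda>i. Xs $ i"] by simp
qed


end
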